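(* Let $n\ge1$, $\preceq$ an admissible order on $L([0,1])$, $F\colon L([0,1])^2\to L([0,1])$, $G\colon L([0,1])^n\to L([0,1])$. The IV Sugeno-like $FG$-functional $\mathbf S_m^{F,G}$ is non-decreasing (in each argument, w.r.t. $\preceq$) for every IV fuzzy measure $m$ whenever: (i) $F(\cdot,\mathbf1)$ is non-decreasing, $G=f\circ\mathrm{Proj}_1$ for some non-decreasing $f\colon L([0,1])\to L([0,1])$; or (ii) $F$ is non-decreasing (in each variable), $G=f\circ\vee$ for some non-decreasing $f\colon L([0,1])\to L([0,1])$.
   Context: $N=\{1,\dots,n\}$. $L([0,1])=\{[a,b]:0\le a\le b\le1\}$, $\mathbf0=[0,0]$, $\mathbf1=[1,1]$. An admissible order $\preceq$ is a total order on $L([0,1])$ with $[a,b]\preceq[c,d]$ whenever $a\le c$, $b\le d$. $\vee$ denotes maximum w.r.t. $\preceq$; all monotonicity is w.r.t. $\preceq$; $\mathrm{Proj}_1(X_1,\dots,X_n)=X_1$. An IV fuzzy measure w.r.t. $\preceq$ is $m\colon2^N\to L([0,1])$, $m(\emptyset)=\mathbf0$, $m(N)=\mathbf1$, $m(A)\preceq m(B)$ for $A\subseteq B$. For a permutation $\sigma$, $E_{\sigma(i)}=\{\sigma(i),\dots,\sigma(n)\}$. $\mathbf S_m^{F,G}(X_1,\dots,X_n)=G\big(F(X_{\sigma(1)},m(E_{\sigma(1)})),\dots,F(X_{\sigma(n)},m(E_{\sigma(n)}))\big)$ with $\sigma$ any permutation such that $X_{\sigma(1)}\preceq\dots\preceq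 X_{\sigma(n)}$; it is defined when this value does not depend on the choice of $\sigma$ for all inputs. *)

theory Defs
  imports Complex_Main "HOL-Combinatorics.Permutations"
begin

text \<open>Closed subintervals [a,b] of [0,1], represented as pairs (a,b).\<close>
definition Lint :: "(real \<times> real) set" where
  "Lint = {(a, b). 0 \<le> a \<and> a \<le> b \<and> b \<le> 1}"

definition zeroI :: "real \<times> real" where "zeroI = (0, 0)"
definition oneI :: "real \<times> real" where "oneI = (1, 1)"

definition admissible :: "(real \<times> real \<Rightarrow> real \<times> real \<Rightarrow> bool) \<Rightarrow> bool" where
  "admissible le \<longleftrightarrow>
     (\<forall>x\<in>Lint. le x x) \<and>
     (\<forall>x\<in>Lint. \<forall>y\<in>Lint. le x y \<and> le y x \<longrightarrow> x = y) \<and>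
     (\<forall>x\<in>Lint. \<forall>y\<in>Lint. \<forall>z\<in>Lint. le x y \<and> le y z \<longrightarrow> le x z) \<and>
     (\<forall>x\<in>Lint. \<forall>y\<in>Lint. le x y \<or> le y x) \<and>
     (\<forall>a b c d. (a, b) \<in> Lint \<and> (c, d) \<in> Lint \<and> a \<le> c \<and> b \<le> d \<longrightarrow> le (a, b) (c, d))"

definition lmax :: "(real \<times> real \<Rightarrow> real \<times> real \<Rightarrow> bool) \<Rightarrow> nat \<Rightarrow> (nat \<Rightarrow> real \<times> real) \<Rightarrow> real \<times> real" where
  "lmax le n X = (THE y. y \<in> X ` {1..n} \<and> (\<forall>z\<in>X ` {1..n}. le z y))"

definition mono_le :: "(real \<times> real \<Rightarrow> real \<times> real \<Rightarrow> bool) \<Rightarrow> (real \<times> real \<Rightarrow> real \<times> real) \<Rightarrow> bool" where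
  "mono_le le f \<longleftrightarrow> (\<forall>x\<in>Lint. \<forall>y\<in>Lint. le x y \<longrightarrow> le (f x) (f y))"

definition iv_fuzzy_measure :: "(real \<times> real \<Rightarrow> real \<times> real \<Rightarrow> bool) \<Rightarrow> nat \<Rightarrow> (nat set \<Rightarrow> real \<times> real) \<Rightarrow> bool" where
  "iv_fuzzy_measure le n m \<longleftrightarrow>
     (\<forall>A. A \<subseteq> {1..n} \<longrightarrow> m A \<in> Lint) \<and>
     m {} = zeroI \<and> m {1..n} = oneI \<and>
     (\<forall>A B. A \<subseteq> B \<and> B \<subseteq> {1..n} \<longrightarrow> le (m A) (m B))"

definition sorting_perm :: "(real \<times> real \<Rightarrow> real \<times> real \<Rightarrow> bool) \<Rightarrow> nat \<Rightarrow> (nat \<Rightarrow> real \<times> real) \<Rightarrow> (nat \<Rightarrow> nat) \<Rightarrow> bool" where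
  "sorting_perm le n X \<sigma> \<longleftrightarrow> \<sigma> permutes {1..n} \<and>
     (\<forall>i j. 1 \<le> i \<and> i \<le> j \<and> j \<le> n \<longrightarrow> le (X (\<sigma> i)) (X (\<sigma> j)))"

definition sugeno_val ::
  "(real \<times> real \<Rightarrow> real \<times> real \<Rightarrow> real \<times> real) \<Rightarrow> ((nat \<Rightarrow> real \<times> real) \<Rightarrow> real \<times> real)
   \<Rightarrow> nat \<Rightarrow> (nat set \<Rightarrow> real \<times> real) \<Rightarrow> (nat \<Rightarrow> real \<times> real) \<Rightarrow> (nat \<Rightarrow> nat) \<Rightarrow> real \<times> real" where
  "sugeno_val F G n m X \<sigma> = G (\<lambda>i. F (X (\<sigma> i)) (m (\<sigma> ` {i..n})))"

text \<open>S_m^{F,G} is (well defined and) non-decreasing in each argument: raising one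
  argument never decreases the value, whatever sorting permutations are used
  (taking y = X i this also yields independence of the choice of sigma).\<close>
definition sugeno_FG_nondecreasing ::
  "(real \<times> real \<Rightarrow> real \<times> real \<Rightarrow> bool) \<Rightarrow> (real \<times> real \<Rightarrow> real \<times> real \<Rightarrow> real \<times> real)
   \<Rightarrow> ((nat \<Rightarrow> real \<times> real) \<Rightarrow> real \<times> real) \<Rightarrow> nat \<Rightarrow> (nat set \<Rightarrow> real \<times> real) \<Rightarrow> bool" where
  "sugeno_FG_nondecreasing le F G n m \<longleftrightarrow>
     (\<forall>X i y \<sigma> \<sigma>'. (\<forall>j\<in>{1..n}. X j \<in> Lint) \<longrightarrow> i \<in> {1..n} \<longrightarrow> y \<in> Lint \<longrightarrow>
        le (X i) y \<longrightarrow> sorting_perm le n X \<sigma> \<longrightarrow> sorting_perm le n (X(i := y)) \<sigma>' \<longrightarrow>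
        le (sugeno_val F G n m X \<sigma>) (sugeno_val F G n m (X(i := y)) \<sigma>'))"

end

theory Submission
  imports Defs
begin

lemma adm_facts:
  assumes "admissible le"
  shows "\<And>x. x \<in> Lint \<Longrightarrow> le x x"
    and "\<And>x y. x \<in> Lint \<Longrightarrow> y \<in> Lint \<Longrightarrow> le x y \<Longrightarrow> le y x \<Longrightarrow> x = y"
    and "\<And>x y z. x \<in> Lint \<Longrightarrow> y \<in> Lint \<Longrightarrow> z \<in> Lint \<Longrightarrow> le x y \<Longrightarrow> le y z \<Longrightarrow> le x z"
    and "\<And>x y. x \<in> Lint \<Longrightarrow> y \<in> Lint \<Longrightarrow> le x y \<or> le y x"
  using assms unfolding admissible_def by blast+

lemma max_exists:
  assumes "admissible le" "finite S" "S \<noteq> {}" "S \<subseteq> Lint"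
  shows "\<exists>y\<in>S. \<forall>z\<in>S. le z y"
  using assms(2,3,4)
proof (induction S rule: finite_ne_induct)
  case (singleton x)
  then show ?case using adm_facts(1)[OF assms(1)] by auto
next
  case (insert x S)
  then obtain y where y: "y \<in> S" "\<forall>z\<in>S. le z y" by auto
  show ?case
  proof (cases "le y x")
    case True
    then show ?thesis using y insert.prems adm_facts(1,3)[OF assms(1)]
      by (metis insert_iff subsetD)
  next
    case False
    then show ?thesis using y insert.prems adm_facts(1,4)[OF assms(1)]
      by (metis insert_iff subsetD)
  qed
qed

lemma lmax_prop:
  assumes "admissible le" "n \<ge> 1" "\<forall>j\<in>{1..n}. X j \<in> Lint"
  shows "lmax le n X \<in> X ` {1..n} \<and> (\<forall>z\<in>X ` {1..n}. le z (lmax le n X))"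
proof -
  have S: "finite (X ` {1..n})" "X ` {1..n} \<noteq> {}" "X ` {1..n} \<subseteq> Lint"
    using assms by auto
  obtain y where y: "y \<in> X ` {1..n}" "\<forall>z\<in>X ` {1..n}. le z y"
    using max_exists[OF assms(1) S] by blast
  have ex1: "\<exists>!y. y \<in> X ` {1..n} \<and> (\<forall>z\<in>X ` {1..n}. le z y)"
  proof (rule ex1I[of _ y])
    show "y \<in> X ` {1..n} \<and> (\<forall>z\<in>X ` {1..n}. le z y)" using y by blast
  next
    fix w assume w: "w \<in> X ` {1..n} \<and> (\<forall>z\<in>X ` {1..n}. le z w)"
    then show "w = y" using y S(3) adm_facts(2)[OF assms(1)] by blast
  qed
  show ?thesis unfolding lmax_def using theI'[OF ex1] .
qed

theorem proposition11:
  fixes le :: "real \<times> real \<Rightarrow> real \<times> real \<Rightarrow> bool"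
    and F :: "real \<times> real \<Rightarrow> real \<times> real \<Rightarrow> real \<times> real"
    and G :: "(nat \<Rightarrow> real \<times> real) \<Rightarrow> real \<times> real"
    and n :: nat
  assumes "n \<ge> 1"
    and "admissible le"
    and F_range: "\<forall>x\<in>Lint. \<forall>y\<in>Lint. F x y \<in> Lint"
    and G_range: "\<forall>X. (\<forall>j\<in>{1..n}. X j \<in> Lint) \<longrightarrow> G X \<in> Lint"
    and "(mono_le le (\<lambda>x. F x oneI) \<and>
           (\<exists>f. (\<forall>x\<in>Lint. f x \<in> Lint) \<and> mono_le le f \<and>
                (\<forall>X. (\<forall>j\<in>{1..n}. X j \<in> Lint) \<longrightarrow> G X = f (X 1))))
       \<or> ((\<forall>y\<in>Lint. mono_le le (\<lambda>x. F x y)) \<and> (\<forall>x\<in>Lint. mono_le le (\<lambda>y. F x y)) \<and>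
           (\<exists>f. (\<forall>x\<in>Lint. f x \<in> Lint) \<and> mono_le le f \<and>
                (\<forall>X. (\<forall>j\<in>{1..n}. X j \<in> Lint) \<longrightarrow> G X = f (lmax le n X))))"
  shows "\<forall>m. iv_fuzzy_measure le n m \<longrightarrow> sugeno_FG_nondecreasing le F G n m"
proof (intro allI impI)
  fix m assume mm: "iv_fuzzy_measure le n m"
  note refl = adm_facts(1)[OF assms(2)]
  note trans = adm_facts(3)[OF assms(2)]
  have mL: "\<And>A. A \<subseteq> {1..n} \<Longrightarrow> m A \<in> Lint" using mm unfolding iv_fuzzy_measure_def by blast
  have mmono: "\<And>A B. A \<subseteq> B \<Longrightarrow> B \<subseteq> {1..n} \<Longrightarrow> le (m A) (m B)"
    using mm unfolding iv_fuzzy_measure_def by blast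
  have mN: "m {1..n} = oneI" using mm unfolding iv_fuzzy_measure_def by blast
  show "sugeno_FG_nondecreasing le F G n m"
    unfolding sugeno_FG_nondecreasing_def
  proof (intro allI impI)
    fix X i y \<sigma> \<sigma>'
    assume XL: "\<forall>j\<in>{1..n}. X j \<in> Lint" and i: "i \<in> {1..n}" and yL: "y \<in> Lint"
      and Xy: "le (X i) y" and s: "sorting_perm le n X \<sigma>"
      and s': "sorting_perm le n (X(i := y)) \<sigma>'"
    define X' where "X' = X(i := y)"
    have XL': "\<And>j. j \<in> {1..n} \<Longrightarrow> X j \<in> Lint" using XL by blast
    have X'L': "\<And>j. j \<in> {1..n} \<Longrightarrow> X' j \<in> Lint"
      unfolding X'_def using XL' yL by simp
    have X'L: "\<forall>j\<in>{1..n}. X' j \<in> Lint" using X'L' by blast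
    have XX': "le (X j) (X' j)" if j: "j \<in> {1..n}" for j
    proof (cases "j = i")
      case True
      then show ?thesis unfolding X'_def using Xy by simp
    next
      case False
      then show ?thesis unfolding X'_def using refl[OF XL'[OF j]] by simp
    qed
    have p: "\<sigma> permutes {1..n}" and so: "\<And>a b. 1 \<le> a \<Longrightarrow> a \<le> b \<Longrightarrow> b \<le> n \<Longrightarrow> le (X (\<sigma> a)) (X (\<sigma> b))"
      using s unfolding sorting_perm_def by blast+
    have p': "\<sigma>' permutes {1..n}" and so': "\<And>a b. 1 \<le> a \<Longrightarrow> a \<le> b \<Longrightarrow> b \<le> n \<Longrightarrow> le (X' (\<sigma>' a)) (X' (\<sigma>' b))"
      using s' unfolding sorting_perm_def X'_def by blast+
    have pin: "\<And>k. k \<in> {1..n} \<Longrightarrow> \<sigma> k \<in> {1..n}" using permutes_in_image[OF p] by simp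
    have pin': "\<And>k. k \<in> {1..n} \<Longrightarrow> \<sigma>' k \<in> {1..n}" using permutes_in_image[OF p'] by simp
    have Esub: "\<And>k. k \<ge> 1 \<Longrightarrow> \<sigma> ` {k..n} \<subseteq> {1..n}"
    proof
      fix k x assume "1 \<le> k" "x \<in> \<sigma> ` {k..n}"
      then obtain l where "l \<in> {k..n}" "x = \<sigma> l" by blast
      then show "x \<in> {1..n}" using pin \<open>1 \<le> k\<close> by simp
    qed
    have Esub': "\<And>k. k \<ge> 1 \<Longrightarrow> \<sigma>' ` {k..n} \<subseteq> {1..n}"
    proof
      fix k x assume "1 \<le> k" "x \<in> \<sigma>' ` {k..n}"
      then obtain l where "l \<in> {k..n}" "x = \<sigma>' l" by blast
      then show "x \<in> {1..n}" using pin' \<open>1 \<le> k\<close> by simp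
    qed
    define T where "T = (\<lambda>k. F (X (\<sigma> k)) (m (\<sigma> ` {k..n})))"
    define T' where "T' = (\<lambda>k. F (X' (\<sigma>' k)) (m (\<sigma>' ` {k..n})))"
    have FL: "\<And>a b. a \<in> Lint \<Longrightarrow> b \<in> Lint \<Longrightarrow> F a b \<in> Lint" using F_range by blast
    have TL': "\<And>k. k \<in> {1..n} \<Longrightarrow> T k \<in> Lint" unfolding T_def
    proof -
      fix k assume k: "k \<in> {1..n}"
      have "1 \<le> k" using k by simp
      then show "F (X (\<sigma> k)) (m (\<sigma> ` {k..n})) \<in> Lint"
        using FL[OF XL'[OF pin[OF k]] mL[OF Esub]] by blast
    qed
    have T'L': "\<And>k. k \<in> {1..n} \<Longrightarrow> T' k \<in> Lint" unfolding T'_def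
    proof -
      fix k assume k: "k \<in> {1..n}"
      have "1 \<le> k" using k by simp
      then show "F (X' (\<sigma>' k)) (m (\<sigma>' ` {k..n})) \<in> Lint"
        using FL[OF X'L'[OF pin'[OF k]] mL[OF Esub']] by blast
    qed
    have TL: "\<forall>k\<in>{1..n}. T k \<in> Lint" using TL' by blast
    have T'L: "\<forall>k\<in>{1..n}. T' k \<in> Lint" using T'L' by blast
    have sv: "sugeno_val F G n m X \<sigma> = G T" unfolding sugeno_val_def T_def by simp
    have sv': "sugeno_val F G n m (X(i := y)) \<sigma>' = G T'" unfolding sugeno_val_def T'_def X'_def by simp
    have minX: "\<And>j. j \<in> {1..n} \<Longrightarrow> le (X (\<sigma> 1)) (X j)"
    proof -
      fix j assume j: "j \<in> {1..n}"
      have ij: "inv \<sigma> j \<in> {1..n}" using permutes_in_image[OF permutes_inv[OF p]] j by simp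
      have e: "\<sigma> (inv \<sigma> j) = j" using permutes_inverses(1)[OF p] .
      have "le (X (\<sigma> 1)) (X (\<sigma> (inv \<sigma> j)))" by (rule so) (use ij in auto)
      then show "le (X (\<sigma> 1)) (X j)" unfolding e .
    qed
    from assms(5) show "le (sugeno_val F G n m X \<sigma>) (sugeno_val F G n m (X(i := y)) \<sigma>')"
    proof
      assume A: "mono_le le (\<lambda>x. F x oneI) \<and>
           (\<exists>f. (\<forall>x\<in>Lint. f x \<in> Lint) \<and> mono_le le f \<and>
                (\<forall>X. (\<forall>j\<in>{1..n}. X j \<in> Lint) \<longrightarrow> G X = f (X 1)))"
      then obtain f where fL: "\<forall>x\<in>Lint. f x \<in> Lint" and fm: "mono_le le f"
        and Gf: "\<forall>X. (\<forall>j\<in>{1..n}. X j \<in> Lint) \<longrightarrow> G X = f (X 1)" by blast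
      have n1: "1 \<in> {1..n}" using assms(1) by simp
      have e1: "\<sigma> ` {1..n} = {1..n}" using permutes_image[OF p] by simp
      have e1': "\<sigma>' ` {1..n} = {1..n}" using permutes_image[OF p'] by simp
      have T1: "T 1 = F (X (\<sigma> 1)) oneI" unfolding T_def using e1 mN by simp
      have T'1: "T' 1 = F (X' (\<sigma>' 1)) oneI" unfolding T'_def using e1' mN by simp
      have "le (X (\<sigma> 1)) (X' (\<sigma>' 1))"
        by (rule trans[OF XL'[OF pin[OF n1]] XL'[OF pin'[OF n1]] X'L'[OF pin'[OF n1]]
             minX[OF pin'[OF n1]] XX'[OF pin'[OF n1]]])
      moreover have "\<And>a b. a \<in> Lint \<Longrightarrow> b \<in> Lint \<Longrightarrow> le a b \<Longrightarrow> le (F a oneI) (F b oneI)"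
        using A unfolding mono_le_def by blast
      ultimately have "le (T 1) (T' 1)" unfolding T1 T'1 using XL'[OF pin[OF n1]] X'L'[OF pin'[OF n1]] by blast
      moreover have "\<And>a b. a \<in> Lint \<Longrightarrow> b \<in> Lint \<Longrightarrow> le a b \<Longrightarrow> le (f a) (f b)"
        using fm unfolding mono_le_def by blast
      ultimately have "le (f (T 1)) (f (T' 1))" using TL'[OF n1] T'L'[OF n1] by blast
      moreover have "G T = f (T 1)" using Gf TL by blast
      moreover have "G T' = f (T' 1)" using Gf T'L by blast
      ultimately show ?thesis unfolding sv sv' by simp
    next
      assume A: "(\<forall>y\<in>Lint. mono_le le (\<lambda>x. F x y)) \<and> (\<forall>x\<in>Lint. mono_le le (\<lambda>y. F x y)) \<and>
           (\<exists>f. (\<forall>x\<in>Lint. f x \<in> Lint) \<and> mono_le le f \<and>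
                (\<forall>X. (\<forall>j\<in>{1..n}. X j \<in> Lint) \<longrightarrow> G X = f (lmax le n X)))"
      then obtain f where fL: "\<forall>x\<in>Lint. f x \<in> Lint" and fm: "mono_le le f"
        and Gf: "\<forall>X. (\<forall>j\<in>{1..n}. X j \<in> Lint) \<longrightarrow> G X = f (lmax le n X)" by blast
      have F1: "\<And>a b c. a \<in> Lint \<Longrightarrow> b \<in> Lint \<Longrightarrow> c \<in> Lint \<Longrightarrow> le a b \<Longrightarrow> le (F a c) (F b c)"
        using A unfolding mono_le_def by blast
      have F2: "\<And>a b c. a \<in> Lint \<Longrightarrow> b \<in> Lint \<Longrightarrow> c \<in> Lint \<Longrightarrow> le a b \<Longrightarrow> le (F c a) (F c b)"
        using A unfolding mono_le_def by blast
      have LM: "lmax le n T \<in> T ` {1..n}" using lmax_prop[OF assms(2,1) TL] by blast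
      have LM': "\<forall>z\<in>T' ` {1..n}. le z (lmax le n T')" using lmax_prop[OF assms(2,1) T'L] by blast
      have LM'L: "lmax le n T' \<in> Lint"
      proof -
        obtain j where "j \<in> {1..n}" "lmax le n T' = T' j" using lmax_prop[OF assms(2,1) T'L] by blast
        then show ?thesis using T'L' by simp
      qed
      have key: "\<exists>k'\<in>{1..n}. le (T k) (T' k')" if k: "k \<in> {1..n}" for k
      proof -
        define A where "A = \<sigma> ` {k..n}"
        define K where "K = {k'\<in>{1..n}. \<sigma>' k' \<in> A}"
        have k1: "1 \<le> k" using k by simp
        have AN: "A \<subseteq> {1..n}" unfolding A_def using Esub[OF k1] .
        have ik: "inv \<sigma>' (\<sigma> k) \<in> {1..n}"
          using permutes_in_image[OF permutes_inv[OF p']] pin[OF k] by simp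
        have ek: "\<sigma>' (inv \<sigma>' (\<sigma> k)) = \<sigma> k" using permutes_inverses(1)[OF p'] .
        have "\<sigma> k \<in> A" unfolding A_def using k by simp
        then have "inv \<sigma>' (\<sigma> k) \<in> K" unfolding K_def using ik ek by simp
        then have Kne: "K \<noteq> {}" by blast
        have Kf: "finite K" unfolding K_def by simp
        define k' where "k' = Min K"
        have k'K: "k' \<in> K" unfolding k'_def using Min_in[OF Kf Kne] .
        then have k'N: "k' \<in> {1..n}" and k'A: "\<sigma>' k' \<in> A" unfolding K_def by simp_all
        have k'1: "1 \<le> k'" using k'N by simp
        have Asub: "A \<subseteq> \<sigma>' ` {k'..n}"
        proof
          fix a assume a: "a \<in> A"
          then have aN: "a \<in> {1..n}" using AN by blast
          have ia: "inv \<sigma>' a \<in> {1..n}" using permutes_in_image[OF permutes_inv[OF p']] aN by simp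
          have e: "\<sigma>' (inv \<sigma>' a) = a" using permutes_inverses(1)[OF p'] .
          have "inv \<sigma>' a \<in> K" unfolding K_def using ia e a by simp
          then have "k' \<le> inv \<sigma>' a" unfolding k'_def using Kf by simp
          then have "inv \<sigma>' a \<in> {k'..n}" using ia by simp
          then have "\<sigma>' (inv \<sigma>' a) \<in> \<sigma>' ` {k'..n}" by (rule imageI)
          then show "a \<in> \<sigma>' ` {k'..n}" unfolding e .
        qed
        have E'N: "\<sigma>' ` {k'..n} \<subseteq> {1..n}" using Esub'[OF k'1] .
        have mA: "le (m A) (m (\<sigma>' ` {k'..n}))" using mmono[OF Asub E'N] .
        obtain l where l: "l \<in> {k..n}" "\<sigma>' k' = \<sigma> l" using k'A unfolding A_def by blast
        have "le (X (\<sigma> k)) (X (\<sigma> l))" by (rule so) (use l k1 in auto)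
        then have x1: "le (X (\<sigma> k)) (X (\<sigma>' k'))" unfolding l(2) .
        have x2: "le (X (\<sigma>' k')) (X' (\<sigma>' k'))" using XX'[OF pin'[OF k'N]] .
        have x3: "le (X (\<sigma> k)) (X' (\<sigma>' k'))"
          by (rule trans[OF XL'[OF pin[OF k]] XL'[OF pin'[OF k'N]] X'L'[OF pin'[OF k'N]] x1 x2])
        have mAL: "m A \<in> Lint" using mL[OF AN] .
        have a1: "le (T k) (F (X' (\<sigma>' k')) (m A))"
          unfolding T_def A_def[symmetric]
          by (rule F1[OF XL'[OF pin[OF k]] X'L'[OF pin'[OF k'N]] mAL x3])
        have a2: "le (F (X' (\<sigma>' k')) (m A)) (T' k')"
          unfolding T'_def by (rule F2[OF mAL mL[OF E'N] X'L'[OF pin'[OF k'N]] mA])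
        have "le (T k) (T' k')"
          by (rule trans[OF TL'[OF k] FL[OF X'L'[OF pin'[OF k'N]] mAL] T'L'[OF k'N] a1 a2])
        then show ?thesis using k'N by blast
      qed
      obtain k where k: "k \<in> {1..n}" "lmax le n T = T k" using LM by blast
      obtain k' where k': "k' \<in> {1..n}" "le (T k) (T' k')" using key[OF k(1)] by blast
      have "le (T' k') (lmax le n T')" using LM' k'(1) by blast
      then have "le (T k) (lmax le n T')"
        by (rule trans[OF TL'[OF k(1)] T'L'[OF k'(1)] LM'L k'(2)])
      moreover have "\<And>a b. a \<in> Lint \<Longrightarrow> b \<in> Lint \<Longrightarrow> le a b \<Longrightarrow> le (f a) (f b)"
        using fm unfolding mono_le_def by blast
      ultimately have "le (f (lmax le n T)) (f (lmax le n T'))"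
        unfolding k(2) using TL'[OF k(1)] LM'L by blast
      moreover have "G T = f (lmax le n T)" using Gf TL by blast
      moreover have "G T' = f (lmax le n T')" using Gf T'L by blast
      ultimately show ?thesis unfolding sv sv' by simp
    qed
  qed
qed

end
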